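(* Let $k\in\mathbb N$ and $f\in\mathcal R^0_{[1]}(\mathbb R^2)$. Then $f\in\mathcal R^k_{[1]}(\mathbb R^2)$ if and only if $f$ has a polynomial expansion of order $k$ at every point of $\mathbb R^2$, i.e. for every $a\in\mathbb R^2$ there is a polynomial $P_k\in\mathbb R[x,y]$ of degree at most $k$ such that $f(a+h)=f(a)+P_k(h)+o(\|h\|^k)$ as $h\to 0$.
   Context: For $k\in\mathbb N\cup\{\infty\}$, $\mathcal R^k(\mathbb R^2)$ denotes the ring of functions $f:\mathbb R^2\to\mathbb R$ of class $C^k$ that coincide with $p/q$ ($p,q$ polynomials, $q$ nonvanishing there) on some nonempty Zariski open set. For $l\in\mathbb N$: consider compositions $\pi:M\to\mathbb R^2$ of successive blowings-up $M_i\to M_{i-1}$ ($M_0=\mathbb R^2$), each centred at points. An infinitely near point of order $j$ is a sequence $a_0\in M_0,\dots,a_j\in M_j$ where $M_i$ is the blowing-up of $M_{i-1}$ at $a_{i-1}$ and $a_i$ maps to $a_{i-1}$; the number of stages of $\pi$ is the maximal order of infinitely near points in $M$. $\mathcal R^k_{[l]}(\mathbb R^2)$ is the set of $f\in\mathcal R^k(\mathbb R^2)$ for which there is such a $\pi$ with at most $l$ stages such that $f\circ\pi$ is regular on $M$. *)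

theory Defs
  imports "HOL-Analysis.Analysis" "HOL-Library.Landau_Symbols"
begin

definition poly2 :: "(real \<times> real \<Rightarrow> real) \<Rightarrow> bool" where
  "poly2 p \<longleftrightarrow> (\<exists>N c. \<forall>x y. p (x, y) = (\<Sum>i\<le>N. \<Sum>j\<le>N. c i j * x ^ i * y ^ j))"

definition poly2_deg_le :: "nat \<Rightarrow> (real \<times> real \<Rightarrow> real) \<Rightarrow> bool" where
  "poly2_deg_le k p \<longleftrightarrow> (\<exists>c. \<forall>x y. p (x, y) = (\<Sum>i\<le>k. \<Sum>j\<le>k - i. c i j * x ^ i * y ^ j))"

fun Ck :: "nat \<Rightarrow> (real \<times> real \<Rightarrow> real) \<Rightarrow> bool" where
  "Ck 0 f = continuous_on UNIV f"
| "Ck (Suc k) f = (\<exists>g1 g2. (\<forall>z. (f has_derivative (\<lambda>h. g1 z * fst h + g2 z * snd h)) (at z))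
                       \<and> Ck k g1 \<and> Ck k g2)"

text \<open>Rational function: coincides with p/q on a nonempty Zariski open set
  (every nonempty Zariski open set contains a nonempty basic open set {r \<noteq> 0}).\<close>
definition rational2 :: "(real \<times> real \<Rightarrow> real) \<Rightarrow> bool" where
  "rational2 f \<longleftrightarrow> (\<exists>p q. poly2 p \<and> poly2 q \<and> (\<exists>z. q z \<noteq> 0) \<and>
                       (\<forall>z. q z \<noteq> 0 \<longrightarrow> f z = p z / q z))"

definition Rk :: "nat \<Rightarrow> (real \<times> real \<Rightarrow> real) \<Rightarrow> bool" where
  "Rk k f \<longleftrightarrow> Ck k f \<and> rational2 f"

definition regular_at :: "(real \<times> real \<Rightarrow> real) \<Rightarrow> real \<times> real \<Rightarrow> bool" where
  "regular_at g z \<longleftrightarrow> (\<exists>p q. poly2 p \<and> poly2 q \<and> q z \<noteq> 0 \<and>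
                          (\<forall>w. q w \<noteq> 0 \<longrightarrow> g w = p w / q w))"

text \<open>f \<circ> \<pi> is regular on M, where \<pi> : M \<rightarrow> R^2 is the blowing-up of R^2 at the
  finite set S of points. M is covered by R^2 - S and, for each a \<in> S, by the two
  standard charts (u,v) \<mapsto> a + (u, u v) and (u,v) \<mapsto> a + (u v, u), the exceptional
  divisor over a being {u = 0} in both charts.\<close>
definition blowup_regular :: "(real \<times> real) set \<Rightarrow> (real \<times> real \<Rightarrow> real) \<Rightarrow> bool" where
  "blowup_regular S f \<longleftrightarrow> finite S \<and>
     (\<forall>z. z \<notin> S \<longrightarrow> regular_at f z) \<and>
     (\<forall>a\<in>S. \<forall>v.
        regular_at (\<lambda>w. f (fst a + fst w, snd a + fst w * snd w)) (0, v) \<and>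
        regular_at (\<lambda>w. f (fst a + fst w * snd w, snd a + fst w)) (0, v))"

text \<open>R^k_[1](R^2): a composition of point blowings-up with at most one stage is
  exactly a blowing-up of R^2 at a finite (possibly empty) set of points.\<close>
definition Rk1 :: "nat \<Rightarrow> (real \<times> real \<Rightarrow> real) \<Rightarrow> bool" where
  "Rk1 k f \<longleftrightarrow> Rk k f \<and> (\<exists>S. blowup_regular S f)"

definition has_poly_expansion :: "nat \<Rightarrow> (real \<times> real \<Rightarrow> real) \<Rightarrow> real \<times> real \<Rightarrow> bool" where
  "has_poly_expansion k f a \<longleftrightarrow> (\<exists>P. poly2_deg_le k P \<and>
     (\<lambda>h. f (a + h) - f a - P h) \<in> o[at 0](\<lambda>h. norm h ^ k))"

end

theory Submission
  imports Defs "HOL-Computational_Algebra.Polynomial"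
begin


inductive pp :: "(real \<times> real \<Rightarrow> real) \<Rightarrow> bool" where
  pp_const: "pp (\<lambda>z. c)"
| pp_fst: "pp fst"
| pp_snd: "pp snd"
| pp_add: "pp p \<Longrightarrow> pp q \<Longrightarrow> pp (\<lambda>z. p z + q z)"
| pp_mult: "pp p \<Longrightarrow> pp q \<Longrightarrow> pp (\<lambda>z. p z * q z)"

lemma pp_diff: "pp p \<Longrightarrow> pp q \<Longrightarrow> pp (\<lambda>z. p z - q z)"
proof -
  assume a: "pp p" "pp q"
  have "pp (\<lambda>z. p z + (\<lambda>z. -1) z * q z)" by (intro pp.intros a)
  thus ?thesis by simp
qed

lemma pp_power: "pp p \<Longrightarrow> pp (\<lambda>z. p z ^ n)"
  by (induction n) (auto intro: pp.intros)

lemma pp_sum: "finite A \<Longrightarrow> (\<And>i. i \<in> A \<Longrightarrow> pp (f i)) \<Longrightarrow> pp (\<lambda>z. \<Sum>i\<in>A. f i z)"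
  by (induction A rule: finite_induct) (auto intro: pp.intros)

lemma pp_subst: "pp p \<Longrightarrow> pp r \<Longrightarrow> pp s \<Longrightarrow> pp (\<lambda>z. p (r z, s z))"
  by (induction p rule: pp.induct) (auto intro: pp.intros)

lemma pp_deriv: "pp p \<Longrightarrow> \<exists>px py. pp px \<and> pp py \<and>
   (\<forall>z. (p has_derivative (\<lambda>h. px z * fst h + py z * snd h)) (at z))"
proof (induction p rule: pp.induct)
  case (pp_const c)
  show ?case by (rule exI[of _ "\<lambda>z. 0"], rule exI[of _ "\<lambda>z. 0"]) (auto intro: pp.intros)
next
  case pp_fst
  show ?case
    apply (rule exI[of _ "\<lambda>z. 1"], rule exI[of _ "\<lambda>z. 0"])
    apply (auto intro: pp.intros)
    using has_derivative_fst[OF has_derivative_ident] by blast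
next
  case pp_snd
  show ?case
    apply (rule exI[of _ "\<lambda>z. 0"], rule exI[of _ "\<lambda>z. 1"])
    apply (auto intro: pp.intros)
    using has_derivative_snd[OF has_derivative_ident] by blast
next
  case (pp_add p q)
  then obtain px py qx qy where h: "pp px" "pp py" "pp qx" "pp qy"
    "\<And>z. (p has_derivative (\<lambda>h. px z * fst h + py z * snd h)) (at z)"
    "\<And>z. (q has_derivative (\<lambda>h. qx z * fst h + qy z * snd h)) (at z)" by blast
  show ?case
    apply (rule exI[of _ "\<lambda>z. px z + qx z"], rule exI[of _ "\<lambda>z. py z + qy z"])
    apply (auto intro: pp.intros h)
    apply (rule has_derivative_eq_rhs, rule has_derivative_add[OF h(5) h(6)])
    by (auto simp: algebra_simps)
next
  case (pp_mult p q)
  then obtain px py qx qy where h: "pp px" "pp py" "pp qx" "pp qy"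
    "\<And>z. (p has_derivative (\<lambda>h. px z * fst h + py z * snd h)) (at z)"
    "\<And>z. (q has_derivative (\<lambda>h. qx z * fst h + qy z * snd h)) (at z)" by blast
  show ?case
    apply (rule exI[of _ "\<lambda>z. p z * qx z + px z * q z"], rule exI[of _ "\<lambda>z. p z * qy z + py z * q z"])
    apply (auto intro!: pp.intros h pp_mult.hyps)
    apply (rule has_derivative_eq_rhs, rule has_derivative_mult[OF h(5) h(6)])
    by (auto simp: algebra_simps)
qed

lemma pp_cont: "pp p \<Longrightarrow> isCont p z"
  using pp_deriv has_derivative_continuous by blast



definition peval :: "real poly poly \<Rightarrow> real \<times> real \<Rightarrow> real" where
  "peval Q z = poly (poly Q [:fst z:]) (snd z)"

lemma pp_peval_ex: "pp p \<Longrightarrow> \<exists>Q. p = peval Q"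
proof (induction p rule: pp.induct)
  case (pp_const c)
  show ?case by (rule exI[of _ "[:[:c:]:]"]) (auto simp: peval_def)
next
  case pp_fst
  show ?case by (rule exI[of _ "[:0, 1:]"]) (auto simp: peval_def fun_eq_iff)
next
  case pp_snd
  show ?case by (rule exI[of _ "[:[:0, 1:]:]"]) (auto simp: peval_def fun_eq_iff)
next
  case (pp_add p q)
  then obtain Q1 Q2 where "p = peval Q1" "q = peval Q2" by blast
  thus ?case by (intro exI[of _ "Q1 + Q2"]) (auto simp: peval_def fun_eq_iff)
next
  case (pp_mult p q)
  then obtain Q1 Q2 where "p = peval Q1" "q = peval Q2" by blast
  thus ?case by (intro exI[of _ "Q1 * Q2"]) (auto simp: peval_def fun_eq_iff)
qed

lemma pp_poly_snd: "pp (\<lambda>z. poly c (snd z))"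
proof (induction c)
  case (pCons a c)
  have "pp (\<lambda>z. (\<lambda>z. a) z + snd z * poly c (snd z))"
    by (intro pp.intros pCons)
  thus ?case by simp
qed (auto intro: pp.intros)

lemma pp_peval: "pp (peval Q)"
proof (induction Q)
  case 0
  then show ?case by (simp add: peval_def pp.intros)
next
  case (pCons c Q)
  have "pp (\<lambda>z. poly c (snd z) + fst z * peval Q z)"
    by (intro pp.intros pp_poly_snd pCons)
  moreover have "peval (pCons c Q) = (\<lambda>z. poly c (snd z) + fst z * peval Q z)"
    by (auto simp: peval_def fun_eq_iff poly_monom)
  ultimately show ?case by simp
qed

lemma poly_pad: fixes x :: "'a::{comm_semiring_0,semiring_1}" assumes "degree p \<le> n" shows "poly p x = (\<Sum>i\<le>n. coeff p i * x ^ i)"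
proof -
  have "(\<Sum>i\<le>n. coeff p i * x ^ i) = (\<Sum>i\<le>degree p. coeff p i * x ^ i)"
    by (rule sum.mono_neutral_right) (use assms in \<open>auto simp: coeff_eq_0\<close>)
  thus ?thesis by (simp add: poly_altdef)
qed

lemma peval_poly2: "poly2 (peval Q)"
proof -
  define N where "N = degree Q + (\<Sum>i\<le>degree Q. degree (coeff Q i))"
  have dQ: "degree Q \<le> N" unfolding N_def by simp
  have dc: "degree (coeff Q i) \<le> N" for i
  proof (cases "i \<le> degree Q")
    case True
    have "degree (coeff Q i) \<le> (\<Sum>i\<le>degree Q. degree (coeff Q i))"
      by (rule member_le_sum) (use True in auto)
    thus ?thesis unfolding N_def by simp
  next
    case False thus ?thesis by (simp add: coeff_eq_0)
  qed
  have "peval Q (x, y) = (\<Sum>i\<le>N. \<Sum>j\<le>N. coeff (coeff Q i) j * x ^ i * y ^ j)" for x y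
  proof -
    have "poly Q [:x:] = (\<Sum>i\<le>N. coeff Q i * [:x:] ^ i)" by (rule poly_pad[OF dQ])
    hence "peval Q (x,y) = (\<Sum>i\<le>N. poly (coeff Q i) y * x ^ i)"
      by (simp add: peval_def poly_sum poly_mult poly_power)
    also have "\<dots> = (\<Sum>i\<le>N. (\<Sum>j\<le>N. coeff (coeff Q i) j * y ^ j) * x ^ i)"
      using poly_pad[OF dc] by simp
    also have "\<dots> = (\<Sum>i\<le>N. \<Sum>j\<le>N. coeff (coeff Q i) j * x ^ i * y ^ j)"
      by (simp add: sum_distrib_left sum_distrib_right mult_ac)
    finally show ?thesis .
  qed
  thus ?thesis unfolding poly2_def by (intro exI[of _ N] exI[of _ "\<lambda>i j. coeff (coeff Q i) j"]) auto
qed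

lemma pp_poly2: "pp p \<Longrightarrow> poly2 p"
  using pp_peval_ex peval_poly2 by blast

lemma poly2_pp: "poly2 p \<Longrightarrow> pp p"
proof -
  assume "poly2 p"
  then obtain N c where h: "\<forall>x y. p (x, y) = (\<Sum>i\<le>N. \<Sum>j\<le>N. c i j * x ^ i * y ^ j)"
    unfolding poly2_def by blast
  have "pp (\<lambda>z. \<Sum>i\<le>N. \<Sum>j\<le>N. c i j * fst z ^ i * snd z ^ j)"
    by (intro pp_sum pp_mult pp_power pp.intros) auto
  moreover have "p = (\<lambda>z. \<Sum>i\<le>N. \<Sum>j\<le>N. c i j * fst z ^ i * snd z ^ j)"
    using h by (auto simp: fun_eq_iff)
  ultimately show ?thesis by simp
qed

lemma poly2_iff_pp: "poly2 p \<longleftrightarrow> pp p"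
  using pp_poly2 poly2_pp by blast

lemma pp_div_fst:
  assumes "pp p" "pp q" "q (0, v0) \<noteq> 0" "\<And>v. q (0, v) \<noteq> 0 \<Longrightarrow> p (0, v) = 0"
  shows "\<exists>p1. pp p1 \<and> (\<forall>w. p w = fst w * p1 w)"
proof -
  obtain Q where Q: "p = peval Q" using pp_peval_ex[OF assms(1)] by blast
  obtain R where R: "q = peval R" using pp_peval_ex[OF assms(2)] by blast
  have q0: "q (0, v) = poly (coeff R 0) v" for v
    by (simp add: R peval_def poly_0_coeff_0)
  have p0: "p (0, v) = poly (coeff Q 0) v" for v
    by (simp add: Q peval_def poly_0_coeff_0)
  have "coeff R 0 \<noteq> 0" using assms(3) q0 by auto
  hence fin: "finite {v. poly (coeff R 0) v = 0}" by (rule poly_roots_finite)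
  have "coeff Q 0 = 0"
  proof (rule ccontr)
    assume "coeff Q 0 \<noteq> 0"
    hence f2: "finite {v. poly (coeff Q 0) v = 0}" by (rule poly_roots_finite)
    have "UNIV \<subseteq> {v. poly (coeff Q 0) v = 0} \<union> {v. poly (coeff R 0) v = 0}"
      using assms(4) p0 q0 by auto
    hence "finite (UNIV :: real set)" using f2 fin finite_subset by blast
    thus False by (metis infinite_UNIV_char_0)
  qed
  obtain a Q' where Qc: "Q = pCons a Q'" by (cases Q) auto
  with \<open>coeff Q 0 = 0\<close> have a0: "a = 0" by simp
  have "p w = fst w * peval Q' w" for w
    by (simp add: Q Qc a0 peval_def)
  thus ?thesis using pp_peval by blast
qed



definition dl :: "nat \<Rightarrow> (nat \<Rightarrow> nat \<Rightarrow> real) \<Rightarrow> real \<times> real \<Rightarrow> real" where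
  "dl k c h = (\<Sum>i\<le>k. \<Sum>j\<le>k - i. c i j * fst h ^ i * snd h ^ j)"

lemma abs_fst_le: "\<bar>fst h\<bar> \<le> norm (h::real\<times>real)"
proof (cases h)
  case (Pair x y)
  have "sqrt (x\<^sup>2) \<le> sqrt (x\<^sup>2 + y\<^sup>2)" by (intro real_sqrt_le_mono) simp
  thus ?thesis using Pair by (simp add: norm_Pair)
qed

lemma abs_snd_le: "\<bar>snd h\<bar> \<le> norm (h::real\<times>real)"
proof (cases h)
  case (Pair x y)
  have "sqrt (y\<^sup>2) \<le> sqrt (x\<^sup>2 + y\<^sup>2)" by (intro real_sqrt_le_mono) simp
  thus ?thesis using Pair by (simp add: norm_Pair)
qed

lemma deg_le_iff: "poly2_deg_le k P \<longleftrightarrow> (\<exists>c. P = dl k c)"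
  unfolding poly2_deg_le_def dl_def by (auto simp: fun_eq_iff)

lemma dl_pp: "pp (dl k c)"
  unfolding dl_def by (intro pp_sum pp_mult pp_power pp.intros) auto

lemma deg_le_pp: "poly2_deg_le k P \<Longrightarrow> pp P"
  by (metis deg_le_iff dl_pp)

lemma deg_le_add: "poly2_deg_le k A \<Longrightarrow> poly2_deg_le k B \<Longrightarrow> poly2_deg_le k (\<lambda>h. A h + B h)"
proof -
  assume "poly2_deg_le k A" "poly2_deg_le k B"
  then obtain a b where "A = dl k a" "B = dl k b" by (auto simp: deg_le_iff)
  hence "(\<lambda>h. A h + B h) = dl k (\<lambda>i j. a i j + b i j)"
    by (auto simp: fun_eq_iff dl_def sum.distrib distrib_right)
  thus ?thesis by (auto simp: deg_le_iff)
qed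

lemma deg_le_const_add: "poly2_deg_le k Q \<Longrightarrow> poly2_deg_le k (\<lambda>h. d + Q h)"
proof -
  assume "poly2_deg_le k Q"
  then obtain a where a: "Q = dl k a" by (auto simp: deg_le_iff)
  have aux: "(\<Sum>j\<le>m. (if j = 0 then d else 0) * y ^ j) = d" for m and y :: real
    by (induction m) auto
  have aux2: "(\<Sum>j\<le>m. (if j = 0 then d else 0) * snd h ^ j) = d" for m h
    by (rule aux)
  have "dl k (\<lambda>i j. if i = 0 \<and> j = 0 then d else 0) h = d" for h
  proof -
    have "dl k (\<lambda>i j. if i = 0 \<and> j = 0 then d else 0) h =
      (\<Sum>i\<le>k. if i = 0 then (\<Sum>j\<le>k. (if j = 0 then d else 0) * snd h ^ j) else 0)"
      unfolding dl_def by (intro sum.cong refl) auto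
    also have "\<dots> = d" using aux2 by simp
    finally show ?thesis .
  qed
  hence "(\<lambda>h. d + Q h) = dl k (\<lambda>i j. (if i = 0 \<and> j = 0 then d else 0) + a i j)"
    by (auto simp: fun_eq_iff dl_def sum.distrib distrib_right a)
  thus ?thesis by (auto simp: deg_le_iff)
qed

lemma deg_le_zero: "poly2_deg_le k (\<lambda>h. 0)"
  unfolding poly2_deg_le_def by (rule exI[of _ "\<lambda>i j. 0"]) simp

lemma deg_le_shx: "poly2_deg_le (Suc k) (\<lambda>h. \<Sum>i\<le>k. \<Sum>j\<le>k - i. e i j * fst h ^ Suc i * snd h ^ j)"
proof -
  define e' where "e' i j = (case i of 0 \<Rightarrow> 0 | Suc i' \<Rightarrow> e i' j)" for i j
  have "dl (Suc k) e' h = (\<Sum>i\<le>k. \<Sum>j\<le>k - i. e i j * fst h ^ Suc i * snd h ^ j)" for h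
    unfolding dl_def sum.atMost_Suc_shift by (simp add: e'_def)
  thus ?thesis unfolding deg_le_iff by (intro exI[of _ e']) (auto simp: fun_eq_iff)
qed

lemma deg_le_shy: "poly2_deg_le (Suc k) (\<lambda>h. \<Sum>i\<le>k. \<Sum>j\<le>k - i. e i j * fst h ^ i * snd h ^ Suc j)"
proof -
  define e' where "e' i j = (case j of 0 \<Rightarrow> 0 | Suc j' \<Rightarrow> e i j')" for i j
  have "dl (Suc k) e' h = (\<Sum>i\<le>k. \<Sum>j\<le>k - i. e i j * fst h ^ i * snd h ^ Suc j)" for h
  proof -
    have "dl (Suc k) e' h = (\<Sum>i\<le>k. \<Sum>j\<le>Suc k - i. e' i j * fst h ^ i * snd h ^ j)"
      unfolding dl_def sum.atMost_Suc by (simp add: e'_def)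
    also have "\<dots> = (\<Sum>i\<le>k. \<Sum>j\<le>k - i. e i j * fst h ^ i * snd h ^ Suc j)"
    proof (rule sum.cong[OF refl])
      fix i assume "i \<in> {..k}"
      hence "Suc k - i = Suc (k - i)" by auto
      thus "(\<Sum>j\<le>Suc k - i. e' i j * fst h ^ i * snd h ^ j) = (\<Sum>j\<le>k - i. e i j * fst h ^ i * snd h ^ Suc j)"
        by (simp only: sum.atMost_Suc_shift) (simp add: e'_def)
    qed
    finally show ?thesis .
  qed
  thus ?thesis unfolding deg_le_iff by (intro exI[of _ e']) (auto simp: fun_eq_iff)
qed

lemma mono_deriv:
  "((\<lambda>h::real\<times>real. c * fst h ^ i * snd h ^ j) has_derivative
     (\<lambda>d. (c * of_nat i * fst h ^ (i - 1) * snd h ^ j) * fst d +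
          (c * fst h ^ i * (of_nat j * snd h ^ (j - 1))) * snd d)) (at h)"
  apply (rule has_derivative_eq_rhs)
   apply (rule has_derivative_mult has_derivative_const has_derivative_power
      has_derivative_fst has_derivative_snd has_derivative_ident)+
  by (auto simp: fun_eq_iff algebra_simps)

lemma deg_le_deriv:
  assumes "poly2_deg_le (Suc k) P"
  shows "\<exists>Px Py. poly2_deg_le k Px \<and> poly2_deg_le k Py \<and>
     (\<forall>h. (P has_derivative (\<lambda>d. Px h * fst d + Py h * snd d)) (at h))"
proof -
  obtain c where c: "P = dl (Suc k) c" using assms by (auto simp: deg_le_iff)
  define Px where "Px h = (\<Sum>i\<le>Suc k. \<Sum>j\<le>Suc k - i. c i j * of_nat i * fst h ^ (i - 1) * snd h ^ j)" for h
  define Py where "Py h = (\<Sum>i\<le>Suc k. \<Sum>j\<le>Suc k - i. c i j * fst h ^ i * (of_nat j * snd h ^ (j - 1)))" for h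
  have der: "(P has_derivative (\<lambda>d. Px h * fst d + Py h * snd d)) (at h)" for h
    unfolding c dl_def
    apply (rule has_derivative_eq_rhs)
     apply (rule has_derivative_sum, rule has_derivative_sum, rule mono_deriv)
    by (simp add: fun_eq_iff Px_def Py_def sum.distrib sum_distrib_right distrib_right)
  have "Px = dl k (\<lambda>i j. c (Suc i) j * of_nat (Suc i))"
    unfolding Px_def dl_def fun_eq_iff sum.atMost_Suc_shift by (simp add: mult_ac)
  moreover have "Py = dl k (\<lambda>i j. c i (Suc j) * of_nat (Suc j))"
  proof -
    have "Py h = dl k (\<lambda>i j. c i (Suc j) * of_nat (Suc j)) h" for h
    proof -
      have "Py h = (\<Sum>i\<le>k. \<Sum>j\<le>Suc k - i. c i j * fst h ^ i * (of_nat j * snd h ^ (j - 1)))"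
        unfolding Py_def sum.atMost_Suc by simp
      also have "\<dots> = dl k (\<lambda>i j. c i (Suc j) * of_nat (Suc j)) h"
        unfolding dl_def
      proof (rule sum.cong[OF refl])
        fix i assume "i \<in> {..k}"
        hence "Suc k - i = Suc (k - i)" by auto
        thus "(\<Sum>j\<le>Suc k - i. c i j * fst h ^ i * (of_nat j * snd h ^ (j - 1))) =
             (\<Sum>j\<le>k - i. c i (Suc j) * of_nat (Suc j) * fst h ^ i * snd h ^ j)"
          by (simp only: sum.atMost_Suc_shift) (simp add: mult_ac)
      qed
      finally show ?thesis .
    qed
    thus ?thesis by auto
  qed
  ultimately show ?thesis using der unfolding deg_le_iff by blast
qed



lemma eventually_at0_iff:
  "eventually P (at (0::real\<times>real)) \<longleftrightarrow> (\<exists>d>0. \<forall>h. h \<noteq> 0 \<and> norm h < d \<longrightarrow> P h)"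
  unfolding eventually_at by (simp add: dist_norm)

lemma exp0_of_cont:
  assumes "continuous_on UNIV f"
  shows "has_poly_expansion 0 f a"
proof -
  have "isCont f a" using assms continuous_on_eq_continuous_at[OF open_UNIV] by blast
  hence lim: "((\<lambda>h. f (a + h)) \<longlongrightarrow> f a) (at 0)" by (simp add: isCont_iff)
  have "(\<lambda>h. f (a + h) - f a - 0) \<in> o[at 0](\<lambda>h. norm h ^ 0)"
  proof (rule landau_o.smallI)
    fix c :: real assume "c > 0"
    with lim have "eventually (\<lambda>h. dist (f (a + h)) (f a) < c) (at 0)"
      by (simp add: tendsto_iff)
    thus "eventually (\<lambda>h. norm (f (a + h) - f a - 0) \<le> c * norm (norm h ^ 0)) (at 0)"
      by eventually_elim (simp add: dist_norm)
  qed
  thus ?thesis unfolding has_poly_expansion_def using deg_le_zero by blast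
qed

lemma term_deriv:
  "((\<lambda>t::real. (t * x) ^ i * (t * y) ^ j) has_real_derivative
     (real (i + j) * t ^ (i + j - 1) * (x ^ i * y ^ j))) (at t)"
proof -
  have e: "(\<lambda>t::real. (t * x) ^ i * (t * y) ^ j) = (\<lambda>t. t ^ (i + j) * (x ^ i * y ^ j))"
    by (auto simp: fun_eq_iff power_mult_distrib power_add mult_ac)
  show ?thesis unfolding e
    by (rule derivative_eq_intros refl)+ simp
qed

lemma term_eq1: "(b::real) / real (i + j + 1) * (real (Suc i + j) * t ^ (Suc i + j - 1) * (x ^ Suc i * y ^ j))
   = b * (t * x) ^ i * (t * y) ^ j * x"
proof -
  have "real (Suc i + j) = real (i + j + 1)" by simp
  moreover have "real (i + j + 1) \<noteq> 0" by simp
  ultimately show ?thesis by (simp add: power_mult_distrib power_add)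
qed

lemma term_eq2: "(b::real) / real (i + j + 1) * (real (i + Suc j) * t ^ (i + Suc j - 1) * (x ^ i * y ^ Suc j))
   = b * (t * x) ^ i * (t * y) ^ j * y"
proof -
  have "real (i + Suc j) = real (i + j + 1)" by simp
  moreover have "real (i + j + 1) \<noteq> 0" by simp
  ultimately show ?thesis by (simp add: power_mult_distrib power_add)
qed

lemma Ck_taylor: "Ck k f \<Longrightarrow> has_poly_expansion k f a"
proof (induction k arbitrary: f a)
  case 0
  then show ?case using exp0_of_cont by simp
next
  case (Suc k f a)
  from Suc.prems obtain g1 g2 where
    der: "\<And>z. (f has_derivative (\<lambda>h. g1 z * fst h + g2 z * snd h)) (at z)"
    and c1: "Ck k g1" and c2: "Ck k g2" by auto
  obtain Q1 where Q1: "poly2_deg_le k Q1"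
    "(\<lambda>h. g1 (a + h) - g1 a - Q1 h) \<in> o[at 0](\<lambda>h. norm h ^ k)"
    using Suc.IH[OF c1] unfolding has_poly_expansion_def by blast
  obtain Q2 where Q2: "poly2_deg_le k Q2"
    "(\<lambda>h. g2 (a + h) - g2 a - Q2 h) \<in> o[at 0](\<lambda>h. norm h ^ k)"
    using Suc.IH[OF c2] unfolding has_poly_expansion_def by blast
  obtain b1 where b1: "(\<lambda>h. g1 a + Q1 h) = dl k b1"
    using deg_le_const_add[OF Q1(1)] deg_le_iff by blast
  obtain b2 where b2: "(\<lambda>h. g2 a + Q2 h) = dl k b2"
    using deg_le_const_add[OF Q2(1)] deg_le_iff by blast
  define P where "P h = (\<Sum>i\<le>k. \<Sum>j\<le>k - i. (b1 i j / real (i + j + 1)) * fst h ^ Suc i * snd h ^ j)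
     + (\<Sum>i\<le>k. \<Sum>j\<le>k - i. (b2 i j / real (i + j + 1)) * fst h ^ i * snd h ^ Suc j)" for h
  have Pdeg: "poly2_deg_le (Suc k) P"
    unfolding P_def[abs_def] by (intro deg_le_add deg_le_shx deg_le_shy)
  have P0: "P 0 = 0" by (simp add: P_def)
  have main: "(\<lambda>h. f (a + h) - f a - P h) \<in> o[at 0](\<lambda>h. norm h ^ Suc k)"
  proof (rule landau_o.smallI)
    fix c :: real assume cpos: "c > 0"
    define e where "e = c / 2"
    have epos: "e > 0" using cpos by (simp add: e_def)
    have "eventually (\<lambda>h. norm (g1 (a + h) - g1 a - Q1 h) \<le> e * norm (norm h ^ k)) (at 0)"
      by (rule landau_o.smallD[OF Q1(2) epos])
    moreover have "eventually (\<lambda>h. norm (g2 (a + h) - g2 a - Q2 h) \<le> e * norm (norm h ^ k)) (at 0)"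
      by (rule landau_o.smallD[OF Q2(2) epos])
    ultimately have "eventually (\<lambda>h. norm (g1 (a + h) - g1 a - Q1 h) \<le> e * norm (norm h ^ k) \<and>
        norm (g2 (a + h) - g2 a - Q2 h) \<le> e * norm (norm h ^ k)) (at 0)"
      by eventually_elim auto
    then obtain d where dpos: "d > 0" and dH: "\<And>h. h \<noteq> 0 \<Longrightarrow> norm h < d \<Longrightarrow>
        \<bar>g1 (a + h) - g1 a - Q1 h\<bar> \<le> e * norm h ^ k \<and> \<bar>g2 (a + h) - g2 a - Q2 h\<bar> \<le> e * norm h ^ k"
      unfolding eventually_at0_iff by auto
    show "eventually (\<lambda>h. norm (f (a + h) - f a - P h) \<le> c * norm (norm h ^ Suc k)) (at 0)"
      unfolding eventually_at0_iff
    proof (intro exI[of _ d] conjI allI impI dpos)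
      fix h :: "real \<times> real" assume h: "h \<noteq> 0 \<and> norm h < d"
      define x where "x = fst h"
      define y where "y = snd h"
      define \<phi> where "\<phi> t = f (a + t *\<^sub>R h) - P (t *\<^sub>R h)" for t
      define \<phi>' where "\<phi>' t = (g1 (a + t *\<^sub>R h) - dl k b1 (t *\<^sub>R h)) * x
          + (g2 (a + t *\<^sub>R h) - dl k b2 (t *\<^sub>R h)) * y" for t
      have D: "DERIV \<phi> t :> \<phi>' t" for t
      proof -
        have lin: "((\<lambda>t. a + t *\<^sub>R h) has_derivative (\<lambda>s. s *\<^sub>R h)) (at t)"
          by (auto intro!: derivative_eq_intros)
        have Df: "((\<lambda>t. f (a + t *\<^sub>R h)) has_real_derivative
             (g1 (a + t *\<^sub>R h) * x + g2 (a + t *\<^sub>R h) * y)) (at t)"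
          unfolding has_field_derivative_def
          by (rule has_derivative_eq_rhs[OF has_derivative_compose[OF lin der]])
             (auto simp: fun_eq_iff x_def y_def algebra_simps)
        have eq: "(\<lambda>t. P (t *\<^sub>R h)) = (\<lambda>t.
            (\<Sum>i\<le>k. \<Sum>j\<le>k - i. (b1 i j / real (i + j + 1)) * ((t * x) ^ Suc i * (t * y) ^ j))
          + (\<Sum>i\<le>k. \<Sum>j\<le>k - i. (b2 i j / real (i + j + 1)) * ((t * x) ^ i * (t * y) ^ Suc j)))"
          by (simp add: fun_eq_iff P_def x_def y_def mult_ac)
        have DP0: "((\<lambda>t. P (t *\<^sub>R h)) has_real_derivative
            (\<Sum>i\<le>k. \<Sum>j\<le>k - i. (b1 i j / real (i + j + 1)) *
                (real (Suc i + j) * t ^ (Suc i + j - 1) * (x ^ Suc i * y ^ j)))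
          + (\<Sum>i\<le>k. \<Sum>j\<le>k - i. (b2 i j / real (i + j + 1)) *
                (real (i + Suc j) * t ^ (i + Suc j - 1) * (x ^ i * y ^ Suc j)))) (at t)"
          unfolding eq by (intro DERIV_add DERIV_sum DERIV_cmult term_deriv)
        have v: "(\<Sum>i\<le>k. \<Sum>j\<le>k - i. (b1 i j / real (i + j + 1)) *
                (real (Suc i + j) * t ^ (Suc i + j - 1) * (x ^ Suc i * y ^ j)))
          + (\<Sum>i\<le>k. \<Sum>j\<le>k - i. (b2 i j / real (i + j + 1)) *
                (real (i + Suc j) * t ^ (i + Suc j - 1) * (x ^ i * y ^ Suc j)))
          = dl k b1 (t *\<^sub>R h) * x + dl k b2 (t *\<^sub>R h) * y"
          unfolding dl_def sum_distrib_right
          by (intro arg_cong2[where f="(+)"] sum.cong refl)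
             (simp_all only: term_eq1 term_eq2, simp_all add: x_def y_def)
        have DP: "((\<lambda>t. P (t *\<^sub>R h)) has_real_derivative
            (dl k b1 (t *\<^sub>R h) * x + dl k b2 (t *\<^sub>R h) * y)) (at t)"
          using DP0 v by simp
        show ?thesis unfolding \<phi>_def[abs_def] \<phi>'_def
          using DERIV_diff[OF Df DP] by (simp add: algebra_simps)
      qed
      obtain z where z: "0 < z" "z < 1" "\<phi> 1 - \<phi> 0 = (1 - 0) * \<phi>' z"
        using MVT2[of 0 1 \<phi> \<phi>'] D by auto
      have "\<phi> 1 - \<phi> 0 = f (a + h) - f a - P h" by (simp add: \<phi>_def P0)
      moreover have "\<bar>\<phi>' z\<bar> \<le> c * norm h ^ Suc k"
      proof -
        define w where "w = z *\<^sub>R h"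
        have nw: "norm w = z * norm h" using z by (simp add: w_def)
        have w00: "w \<noteq> 0" using z h by (simp add: w_def)
        have w01: "norm w < d"
        proof -
          have "z * norm h < norm h" using z h mult_strict_right_mono[of z 1 "norm h"] by simp
          thus ?thesis using nw h by linarith
        qed
        note w0 = w00 w01
        have nwh: "norm w ^ k \<le> norm h ^ k"
          using nw z mult_left_le_one_le[of "norm h" z] by (intro power_mono) auto
        have ee: "e * norm w ^ k \<le> e * norm h ^ k" using nwh epos by (simp add: mult_left_mono)
        have e1: "\<bar>g1 (a + w) - dl k b1 w\<bar> \<le> e * norm h ^ k"
        proof -
          have "\<bar>g1 (a + w) - dl k b1 w\<bar> = \<bar>g1 (a + w) - g1 a - Q1 w\<bar>"
            using fun_cong[OF b1, of w] by (simp add: algebra_simps)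
          also have "\<dots> \<le> e * norm w ^ k" using dH[OF w0] by blast
          finally show ?thesis using ee by linarith
        qed
        have e2: "\<bar>g2 (a + w) - dl k b2 w\<bar> \<le> e * norm h ^ k"
        proof -
          have "\<bar>g2 (a + w) - dl k b2 w\<bar> = \<bar>g2 (a + w) - g2 a - Q2 w\<bar>"
            using fun_cong[OF b2, of w] by (simp add: algebra_simps)
          also have "\<dots> \<le> e * norm w ^ k" using dH[OF w0] by blast
          finally show ?thesis using ee by linarith
        qed
        have hx: "\<bar>x\<bar> \<le> norm h" unfolding x_def by (rule abs_fst_le)
        have hy: "\<bar>y\<bar> \<le> norm h" unfolding y_def by (rule abs_snd_le)
        have "\<bar>\<phi>' z\<bar> \<le> \<bar>g1 (a + w) - dl k b1 w\<bar> * \<bar>x\<bar> + \<bar>g2 (a + w) - dl k b2 w\<bar> * \<bar>y\<bar>"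
          unfolding \<phi>'_def w_def[symmetric] by (metis abs_mult abs_triangle_ineq)
        also have "\<dots> \<le> (e * norm h ^ k) * norm h + (e * norm h ^ k) * norm h"
          using epos by (intro add_mono mult_mono e1 e2 hx hy) auto
        also have "\<dots> = c * norm h ^ Suc k" by (simp add: e_def)
        finally show ?thesis .
      qed
      ultimately show "norm (f (a + h) - f a - P h) \<le> c * norm (norm h ^ Suc k)"
        using z by simp
    qed
  qed
  show ?case unfolding has_poly_expansion_def using Pdeg main by blast
qed



lemma regular_at_pp: "regular_at g w \<longleftrightarrow> (\<exists>p q. pp p \<and> pp q \<and> q w \<noteq> 0 \<and>
   (\<forall>w'. q w' \<noteq> 0 \<longrightarrow> g w' = p w' / q w'))"
  unfolding regular_at_def poly2_iff_pp by blast

lemma pp_cont_on: "pp p \<Longrightarrow> continuous_on UNIV p"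
  using pp_cont continuous_at_imp_continuous_on by blast

lemma open_pp_ne: "pp q \<Longrightarrow> open {w. q w \<noteq> 0}"
  using open_Collect_neq[of q "\<lambda>_. 0"] pp_cont_on by auto

lemma tendsto_line: "pp p \<Longrightarrow> ((\<lambda>u::real. p (u, v)) \<longlongrightarrow> p (0, v)) (at 0)"
  by (rule isCont_tendsto_compose[OF pp_cont]) (auto intro!: tendsto_eq_intros)

lemma filterlim_ray: "filterlim (\<lambda>u::real. (u, u * v)) (at (0::real\<times>real)) (at 0)"
  unfolding filterlim_at
proof
  show "\<forall>\<^sub>F x in at 0. (x, x * v) \<in> UNIV \<and> (x, x * v) \<noteq> 0"
    unfolding eventually_at by (auto intro!: exI[of _ 1] simp: zero_prod_def)
  show "((\<lambda>x. (x, x * v)) \<longlongrightarrow> 0) (at 0)"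
    unfolding zero_prod_def by (auto intro!: tendsto_eq_intros)
qed

lemma ray_small:
  fixes F :: "real \<times> real \<Rightarrow> real"
  assumes small: "(\<lambda>h. F (a + h)) \<in> o[at 0](\<lambda>h. norm h ^ m)" and j: "j \<le> m"
  shows "((\<lambda>u. F (fst a + u, snd a + u * v) / u ^ j) \<longlongrightarrow> 0) (at 0)"
proof (rule tendstoI)
  fix \<epsilon> :: real assume ep: "\<epsilon> > 0"
  define K where "K = (1 + \<bar>v\<bar>) ^ m"
  have Kpos: "K > 0" unfolding K_def by (simp add: add_pos_nonneg)
  have c: "\<epsilon> / (2 * K) > 0" using ep Kpos by simp
  have ev1: "eventually (\<lambda>h. norm (F (a + h)) \<le> \<epsilon> / (2 * K) * norm (norm h ^ m)) (at 0)"
    by (rule landau_o.smallD[OF small c])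
  have ev2: "eventually (\<lambda>u. norm (F (a + (u, u * v))) \<le> \<epsilon> / (2 * K) * norm (norm (u, u * v) ^ m)) (at 0)"
    using filterlim_ray[of v] ev1 unfolding filterlim_iff by blast
  have ev3: "eventually (\<lambda>u::real. u \<noteq> 0 \<and> \<bar>u\<bar> < 1) (at 0)"
    unfolding eventually_at by (auto intro!: exI[of _ 1])
  show "eventually (\<lambda>u. dist (F (fst a + u, snd a + u * v) / u ^ j) 0 < \<epsilon>) (at 0)"
    using ev2 ev3
  proof eventually_elim
    case (elim u)
    have eq: "a + (u, u * v) = (fst a + u, snd a + u * v)" by (simp add: prod_eq_iff)
    have n1: "norm (u, u * v) \<le> \<bar>u\<bar> * (1 + \<bar>v\<bar>)"
      using norm_Pair_le[of u "u * v"] by (simp add: abs_mult algebra_simps)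
    have "norm (u, u * v) ^ m \<le> (\<bar>u\<bar> * (1 + \<bar>v\<bar>)) ^ m"
      by (intro power_mono n1) simp
    also have "\<dots> = \<bar>u\<bar> ^ j * \<bar>u\<bar> ^ (m - j) * K"
      unfolding K_def power_mult_distrib using j by (simp add: power_add[symmetric])
    also have "\<dots> \<le> \<bar>u\<bar> ^ j * K"
      using elim Kpos by (auto intro!: mult_right_mono power_le_one simp: mult_le_cancel_left1)
    finally have n2: "norm (u, u * v) ^ m \<le> \<bar>u\<bar> ^ j * K" .
    have "\<bar>F (fst a + u, snd a + u * v)\<bar> \<le> \<epsilon> / (2 * K) * norm (u, u * v) ^ m"
      using elim(1) eq by simp
    also have "\<dots> \<le> \<epsilon> / (2 * K) * (\<bar>u\<bar> ^ j * K)"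
      using n2 c by (intro mult_left_mono) auto
    also have "\<dots> = \<epsilon> / 2 * \<bar>u\<bar> ^ j" using Kpos by simp
    finally have "\<bar>F (fst a + u, snd a + u * v)\<bar> / \<bar>u\<bar> ^ j \<le> \<epsilon> / 2"
      using elim(2) by (simp add: divide_le_eq mult.commute)
    hence "\<bar>F (fst a + u, snd a + u * v) / u ^ j\<bar> \<le> \<epsilon> / 2" by (simp add: abs_divide power_abs)
    moreover have "dist (F (fst a + u, snd a + u * v) / u ^ j) 0 = \<bar>F (fst a + u, snd a + u * v) / u ^ j\<bar>"
      by simp
    ultimately show ?case using ep by linarith
  qed
qed



lemma chart_div:
  fixes F :: "real \<times> real \<Rightarrow> real"
  assumes small: "(\<lambda>h. F (a + h)) \<in> o[at 0](\<lambda>h. norm h ^ m)"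
    and pq: "pp p" "pp q" "q (0, v0) \<noteq> 0"
    and G: "\<And>w. q w \<noteq> 0 \<Longrightarrow> F (fst a + fst w, snd a + fst w * snd w) = p w / q w"
  shows "\<exists>p'. pp p' \<and> (\<forall>w. p w = fst w ^ Suc m * p' w)"
proof -
  have "\<forall>j. j \<le> Suc m \<longrightarrow> (\<exists>pj. pp pj \<and> (\<forall>w. p w = fst w ^ j * pj w))"
  proof (intro allI)
    fix j show "j \<le> Suc m \<longrightarrow> (\<exists>pj. pp pj \<and> (\<forall>w. p w = fst w ^ j * pj w))"
    proof (induction j)
      case 0 then show ?case using pq by auto
    next
      case (Suc j)
      show ?case
      proof
        assume jm: "Suc j \<le> Suc m"
        then obtain pj where pj: "pp pj" "\<And>w. p w = fst w ^ j * pj w" using Suc.IH by auto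
        have z: "pj (0, v) = 0" if qv: "q (0, v) \<noteq> 0" for v
        proof -
          have l1: "((\<lambda>u. pj (u, v) / q (u, v)) \<longlongrightarrow> pj (0, v) / q (0, v)) (at 0)"
            by (intro tendsto_divide tendsto_line pj pq qv)
          have evq: "eventually (\<lambda>u. q (u, v) \<noteq> 0) (at 0)"
            using tendsto_imp_eventually_ne[OF tendsto_line[OF pq(2)] qv] .
          have evu: "eventually (\<lambda>u::real. u \<noteq> 0) (at 0)"
            unfolding eventually_at by (auto intro!: exI[of _ 1])
          have ev: "eventually (\<lambda>u. pj (u, v) / q (u, v) = F (fst a + u, snd a + u * v) / u ^ j) (at 0)"
            using evq evu
          proof eventually_elim
            case (elim u)
            have "F (fst a + u, snd a + u * v) = p (u, v) / q (u, v)" using G[of "(u, v)"] elim by simp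
            also have "\<dots> = u ^ j * pj (u, v) / q (u, v)" using pj(2)[of "(u,v)"] by simp
            finally show ?case using elim by simp
          qed
          have l2: "((\<lambda>u. F (fst a + u, snd a + u * v) / u ^ j) \<longlongrightarrow> pj (0, v) / q (0, v)) (at 0)"
            using Lim_transform_eventually[OF l1 ev] .
          have l3: "((\<lambda>u. F (fst a + u, snd a + u * v) / u ^ j) \<longlongrightarrow> 0) (at 0)"
            by (rule ray_small[OF small]) (use jm in simp)
          have "pj (0, v) / q (0, v) = 0"
            using tendsto_unique[OF _ l2 l3] by simp
          thus ?thesis using qv by simp
        qed
        obtain p1 where p1: "pp p1" "\<And>w. pj w = fst w * p1 w"
          using pp_div_fst[OF pj(1) pq(2) pq(3)] z by blast
        show "\<exists>pj. pp pj \<and> (\<forall>w. p w = fst w ^ Suc j * pj w)"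
          using p1 pj(2) by (intro exI[of _ p1]) auto
      qed
    qed
  qed
  thus ?thesis by blast
qed



lemma core:
  fixes F F1 F2 :: "real \<times> real \<Rightarrow> real" and m :: nat
  assumes der: "\<And>z. (F has_derivative (\<lambda>h. F1 z * fst h + F2 z * snd h)) (at z)"
    and small: "(\<lambda>h. F (a + h)) \<in> o[at 0](\<lambda>h. norm h ^ m)"
    and m: "m \<ge> 1" and Fa: "F1 a = 0" "F2 a = 0"
    and reg: "regular_at (\<lambda>w. F (fst a + fst w, snd a + fst w * snd w)) (0, v0)"
  shows "regular_at (\<lambda>w. F1 (fst a + fst w, snd a + fst w * snd w)) (0, v0) \<and>
         regular_at (\<lambda>w. F2 (fst a + fst w, snd a + fst w * snd w)) (0, v0) \<and>
         (\<exists>\<delta>>0. \<exists>C. \<forall>u v. \<bar>u\<bar> < \<delta> \<and> \<bar>v - v0\<bar> < \<delta> \<longrightarrow>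
             \<bar>F1 (fst a + u, snd a + u * v)\<bar> \<le> C * \<bar>u\<bar> ^ m \<and>
             \<bar>F2 (fst a + u, snd a + u * v)\<bar> \<le> C * \<bar>u\<bar> ^ m)"
proof -
  define c where "c w = (fst a + fst w, snd a + fst w * snd w)" for w :: "real \<times> real"
  obtain p q where pq: "pp p" "pp q" "q (0, v0) \<noteq> 0"
    and G: "\<And>w. q w \<noteq> 0 \<Longrightarrow> F (c w) = p w / q w"
    using reg unfolding regular_at_pp c_def by blast
  obtain p' where p': "pp p'" "\<And>w. p w = fst w ^ Suc m * p' w"
    using chart_div[OF small pq] G unfolding c_def by blast
  obtain p'x p'y where dp: "pp p'x" "pp p'y" "\<And>z. (p' has_derivative (\<lambda>h. p'x z * fst h + p'y z * snd h)) (at z)"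
    using pp_deriv[OF p'(1)] by blast
  obtain qx qy where dq: "pp qx" "pp qy" "\<And>z. (q has_derivative (\<lambda>h. qx z * fst h + qy z * snd h)) (at z)"
    using pp_deriv[OF pq(2)] by blast
  define N1 where "N1 w = fst w ^ m * (real (Suc m) * p' w * q w + fst w * (p'x w * q w - p' w * qx w)
       - snd w * (p'y w * q w - p' w * qy w))" for w
  define N2 where "N2 w = fst w ^ m * (p'y w * q w - p' w * qy w)" for w
  have key: "F1 (c w) = N1 w / (q w * q w) \<and> F2 (c w) = N2 w / (q w * q w)" if qw: "q w \<noteq> 0" for w
  proof -
    define A where "A w = real (Suc m) * fst w ^ m * (p' w / q w) + fst w ^ Suc m * ((p'x w * q w - p' w * qx w) / (q w * q w))" for w
    define B where "B w = fst w ^ Suc m * ((p'y w * q w - p' w * qy w) / (q w * q w))" for w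
    have f1: "(fst has_derivative fst) (at w)" using has_derivative_fst[OF has_derivative_ident] by blast
    have f2: "(snd has_derivative snd) (at w)" using has_derivative_snd[OF has_derivative_ident] by blast
    have dc: "(c has_derivative (\<lambda>h. (fst h, snd w * fst h + fst w * snd h))) (at w)"
      unfolding c_def
      by (rule has_derivative_eq_rhs[OF has_derivative_Pair[OF has_derivative_add[OF has_derivative_const f1]
            has_derivative_add[OF has_derivative_const has_derivative_mult[OF f1 f2]]]])
         (auto simp: fun_eq_iff algebra_simps)
    have dG: "((\<lambda>w. F (c w)) has_derivative (\<lambda>h. F1 (c w) * fst h + F2 (c w) * (snd w * fst h + fst w * snd h))) (at w)"
      using has_derivative_compose[OF dc der] by simp
    have dH: "((\<lambda>w. fst w ^ Suc m * (p' w / q w)) has_derivative (\<lambda>h. A w * fst h + B w * snd h)) (at w)"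
      apply (rule has_derivative_eq_rhs)
       apply (rule has_derivative_mult has_derivative_divide has_derivative_power dp(3) dq(3) qw
           has_derivative_fst[OF has_derivative_ident])+
      using qw by (auto simp: fun_eq_iff A_def B_def field_simps)
    have dG2: "((\<lambda>w. F (c w)) has_derivative (\<lambda>h. A w * fst h + B w * snd h)) (at w)"
    proof (rule has_derivative_transform_within_open[OF dH open_pp_ne[OF pq(2)]])
      show "w \<in> {w. q w \<noteq> 0}" using qw by simp
      fix w' assume "w' \<in> {w. q w \<noteq> 0}"
      thus "fst w' ^ Suc m * (p' w' / q w') = F (c w')" using G p'(2) by simp
    qed
    have eqL: "(\<lambda>h. F1 (c w) * fst h + F2 (c w) * (snd w * fst h + fst w * snd h)) = (\<lambda>h. A w * fst h + B w * snd h)"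
      by (rule has_derivative_unique[OF dG dG2])
    have E1: "F1 (c w) + F2 (c w) * snd w = A w" using fun_cong[OF eqL, of "(1,0)"] by simp
    have E2: "F2 (c w) * fst w = B w" using fun_cong[OF eqL, of "(0,1)"] by simp
    have F2eq: "F2 (c w) = N2 w / (q w * q w)"
    proof (cases "fst w = 0")
      case True
      hence "c w = a" by (simp add: c_def)
      thus ?thesis using True m Fa by (simp add: N2_def)
    next
      case False
      have "F2 (c w) * fst w = (N2 w / (q w * q w)) * fst w"
        using E2 by (simp add: B_def N2_def mult_ac)
      thus ?thesis using False by (metis mult_right_cancel)
    qed
    have F1eq: "F1 (c w) = N1 w / (q w * q w)"
    proof -
      have "F1 (c w) = A w - snd w * (N2 w / (q w * q w))" using E1 F2eq by (simp add: algebra_simps)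
      also have "\<dots> = N1 w / (q w * q w)"
        using qw by (simp add: A_def N1_def N2_def field_simps)
      finally show ?thesis .
    qed
    show ?thesis using F1eq F2eq by simp
  qed
  have ppN1: "pp N1" unfolding N1_def[abs_def]
    by (intro pp_mult pp_power pp_diff pp_add pp.intros dp dq pq p')
  have ppN2: "pp N2" unfolding N2_def[abs_def]
    by (intro pp_mult pp_power pp_diff pp_add pp.intros dp dq pq p')
  have ppQ: "pp (\<lambda>w. q w * q w)" by (intro pp_mult pq)
  have r1: "regular_at (\<lambda>w. F1 (c w)) (0, v0)" unfolding regular_at_pp
    using ppN1 ppQ pq(3) key by (intro exI[of _ N1] exI[of _ "\<lambda>w. q w * q w"]) auto
  have r2: "regular_at (\<lambda>w. F2 (c w)) (0, v0)" unfolding regular_at_pp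
    using ppN2 ppQ pq(3) key by (intro exI[of _ N2] exI[of _ "\<lambda>w. q w * q w"]) auto
  define B1 where "B1 w = (real (Suc m) * p' w * q w + fst w * (p'x w * q w - p' w * qx w)
       - snd w * (p'y w * q w - p' w * qy w)) / (q w * q w)" for w
  define B2 where "B2 w = (p'y w * q w - p' w * qy w) / (q w * q w)" for w
  define p0 where "p0 = (0::real, v0)"
  have cB1: "isCont B1 p0" unfolding B1_def[abs_def] p0_def
    using pq(3) by (intro continuous_intros pp_cont dp dq pq p') auto
  have cB2: "isCont B2 p0" unfolding B2_def[abs_def] p0_def
    using pq(3) by (intro continuous_intros pp_cont dp dq pq p') auto
  have cq: "isCont q p0" by (rule pp_cont[OF pq(2)])
  obtain d1 where d1: "d1 > 0" "\<And>w. dist w p0 < d1 \<Longrightarrow> dist (B1 w) (B1 p0) < 1"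
    using cB1 unfolding continuous_at_eps_delta by (meson zero_less_one)
  obtain d2 where d2: "d2 > 0" "\<And>w. dist w p0 < d2 \<Longrightarrow> dist (B2 w) (B2 p0) < 1"
    using cB2 unfolding continuous_at_eps_delta by (meson zero_less_one)
  have qp0: "\<bar>q p0\<bar> > 0" using pq(3) by (simp add: p0_def)
  obtain d3 where d3: "d3 > 0" "\<And>w. dist w p0 < d3 \<Longrightarrow> dist (q w) (q p0) < \<bar>q p0\<bar>"
    using cq qp0 unfolding continuous_at_eps_delta by meson
  define \<delta> where "\<delta> = min d1 (min d2 d3) / 2"
  define C where "C = max (\<bar>B1 p0\<bar> + 1) (\<bar>B2 p0\<bar> + 1)"
  have bnd: "\<forall>u v. \<bar>u\<bar> < \<delta> \<and> \<bar>v - v0\<bar> < \<delta> \<longrightarrow>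
             \<bar>F1 (fst a + u, snd a + u * v)\<bar> \<le> C * \<bar>u\<bar> ^ m \<and>
             \<bar>F2 (fst a + u, snd a + u * v)\<bar> \<le> C * \<bar>u\<bar> ^ m"
  proof (intro allI impI)
    fix u v assume uv: "\<bar>u\<bar> < \<delta> \<and> \<bar>v - v0\<bar> < \<delta>"
    have "dist (u, v) p0 \<le> \<bar>u\<bar> + \<bar>v - v0\<bar>"
      unfolding p0_def dist_norm using norm_Pair_le[of u "v - v0"] by simp
    hence dd: "dist (u, v) p0 < min d1 (min d2 d3)" using uv unfolding \<delta>_def by linarith
    have qw: "q (u, v) \<noteq> 0" using d3(2)[of "(u,v)"] dd by (auto simp: dist_real_def)
    have b1: "\<bar>B1 (u, v)\<bar> \<le> C" using d1(2)[of "(u,v)"] dd by (auto simp: dist_real_def C_def)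
    have b2: "\<bar>B2 (u, v)\<bar> \<le> C" using d2(2)[of "(u,v)"] dd by (auto simp: dist_real_def C_def)
    have e1: "F1 (fst a + u, snd a + u * v) = u ^ m * B1 (u, v)"
      using key[OF qw] by (simp add: c_def N1_def B1_def)
    have e2: "F2 (fst a + u, snd a + u * v) = u ^ m * B2 (u, v)"
      using key[OF qw] by (simp add: c_def N2_def B2_def)
    show "\<bar>F1 (fst a + u, snd a + u * v)\<bar> \<le> C * \<bar>u\<bar> ^ m \<and>
             \<bar>F2 (fst a + u, snd a + u * v)\<bar> \<le> C * \<bar>u\<bar> ^ m"
      unfolding e1 e2 abs_mult power_abs using b1 b2
      by (auto simp: mult.commute[of "\<bar>u\<bar> ^ m"] intro!: mult_right_mono)
  qed
  have "\<delta> > 0" unfolding \<delta>_def using d1 d2 d3 by simp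
  thus ?thesis using r1 r2 bnd unfolding c_def by blast
qed



lemma cover_interval:
  fixes d :: "real \<Rightarrow> real"
  assumes "\<And>v. d v > 0"
  obtains K where "finite K" "K \<subseteq> {-1..1}" "\<And>v'. v' \<in> {-1..1} \<Longrightarrow> \<exists>v\<in>K. \<bar>v' - v\<bar> < d v"
proof -
  have "{-1..1::real} \<subseteq> (\<Union>v\<in>{-1..1}. ball v (d v))" using assms by force
  then obtain K where K: "K \<subseteq> {-1..1}" "finite K" "{-1..1} \<subseteq> (\<Union>v\<in>K. ball v (d v))"
    using compactE_image[of "{-1..1::real}" "{-1..1}" "\<lambda>v. ball v (d v)"] by auto
  show ?thesis
  proof (rule that[OF K(2) K(1)])
    fix v' :: real assume "v' \<in> {-1..1}"
    then obtain v where "v \<in> K" "v' \<in> ball v (d v)" using K(3) by blast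
    thus "\<exists>v\<in>K. \<bar>v' - v\<bar> < d v" by (auto simp: dist_real_def abs_minus_commute)
  qed
qed

lemma bound_cover:
  fixes H :: "real \<times> real \<Rightarrow> real"
  assumes c1: "\<And>v. \<exists>\<delta>>0. \<exists>C. \<forall>u v'. \<bar>u\<bar> < \<delta> \<and> \<bar>v' - v\<bar> < \<delta> \<longrightarrow> \<bar>H (fst a + u, snd a + u * v')\<bar> \<le> C * \<bar>u\<bar> ^ m"
    and c2: "\<And>v. \<exists>\<delta>>0. \<exists>C. \<forall>u v'. \<bar>u\<bar> < \<delta> \<and> \<bar>v' - v\<bar> < \<delta> \<longrightarrow> \<bar>H (fst a + u * v', snd a + u)\<bar> \<le> C * \<bar>u\<bar> ^ m"
  shows "\<exists>\<delta>>0. \<exists>C. \<forall>h. norm h < \<delta> \<longrightarrow> \<bar>H (a + h)\<bar> \<le> C * norm h ^ m"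
proof -
  obtain d1 C1 where D1: "\<And>v. d1 v > 0" "\<And>v u v'. \<bar>u\<bar> < d1 v \<Longrightarrow> \<bar>v' - v\<bar> < d1 v \<Longrightarrow>
      \<bar>H (fst a + u, snd a + u * v')\<bar> \<le> C1 v * \<bar>u\<bar> ^ m"
    using c1 by metis
  obtain d2 C2 where D2: "\<And>v. d2 v > 0" "\<And>v u v'. \<bar>u\<bar> < d2 v \<Longrightarrow> \<bar>v' - v\<bar> < d2 v \<Longrightarrow>
      \<bar>H (fst a + u * v', snd a + u)\<bar> \<le> C2 v * \<bar>u\<bar> ^ m"
    using c2 by metis
  obtain K1 where K1: "finite K1" "\<And>v'. v' \<in> {-1..1} \<Longrightarrow> \<exists>v\<in>K1. \<bar>v' - v\<bar> < d1 v"
    using cover_interval[of d1] D1(1) by metis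
  obtain K2 where K2: "finite K2" "\<And>v'. v' \<in> {-1..1} \<Longrightarrow> \<exists>v\<in>K2. \<bar>v' - v\<bar> < d2 v"
    using cover_interval[of d2] D2(1) by metis
  define \<delta> where "\<delta> = Min (insert 1 (d1 ` K1 \<union> d2 ` K2))"
  define C where "C = Max (insert 0 (C1 ` K1 \<union> C2 ` K2))"
  have fin: "finite (insert 1 (d1 ` K1 \<union> d2 ` K2))" "finite (insert 0 (C1 ` K1 \<union> C2 ` K2))"
    using K1 K2 by auto
  have dpos: "\<delta> > 0" unfolding \<delta>_def using fin(1) D1(1) D2(1) by (subst Min_gr_iff) auto
  have dle1: "\<delta> \<le> d1 v" if "v \<in> K1" for v unfolding \<delta>_def using fin(1) that by (intro Min_le) auto
  have dle2: "\<delta> \<le> d2 v" if "v \<in> K2" for v unfolding \<delta>_def using fin(1) that by (intro Min_le) auto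
  have Cge1: "C1 v \<le> C" if "v \<in> K1" for v unfolding C_def using fin(2) that by (intro Max_ge) auto
  have Cge2: "C2 v \<le> C" if "v \<in> K2" for v unfolding C_def using fin(2) that by (intro Max_ge) auto
  have C0: "0 \<le> C" unfolding C_def using fin(2) by (intro Max_ge) auto
  have "\<forall>h. norm h < \<delta> \<longrightarrow> \<bar>H (a + h)\<bar> \<le> C * norm h ^ m"
  proof (intro allI impI)
    fix h :: "real \<times> real" assume hn: "norm h < \<delta>"
    define x where "x = fst h"
    define y where "y = snd h"
    have ah: "a + h = (fst a + x, snd a + y)" by (simp add: x_def y_def prod_eq_iff)
    have hx: "\<bar>x\<bar> \<le> norm h" unfolding x_def by (rule abs_fst_le)
    have hy: "\<bar>y\<bar> \<le> norm h" unfolding y_def by (rule abs_snd_le)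
    show "\<bar>H (a + h)\<bar> \<le> C * norm h ^ m"
    proof (cases "\<bar>y\<bar> \<le> \<bar>x\<bar>")
      case True
      define v' where "v' = y / x"
      have v'r: "v' \<in> {-1..1}" unfolding v'_def using True
        by (cases "x = 0") (auto simp: abs_le_iff divide_le_eq le_divide_eq)
      have xv: "x * v' = y" unfolding v'_def using True by (cases "x = 0") auto
      obtain v where v: "v \<in> K1" "\<bar>v' - v\<bar> < d1 v" using K1(2)[OF v'r] by blast
      have "\<bar>x\<bar> < d1 v" using hx hn dle1[OF v(1)] by linarith
      hence "\<bar>H (a + h)\<bar> \<le> C1 v * \<bar>x\<bar> ^ m" using D1(2)[OF _ v(2)] ah xv by metis
      also have "\<dots> \<le> C * norm h ^ m"
        using Cge1[OF v(1)] C0 hx by (intro mult_mono power_mono) auto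
      finally show ?thesis .
    next
      case False
      define v' where "v' = x / y"
      have v'r: "v' \<in> {-1..1}" unfolding v'_def using False
        by (cases "y = 0") (auto simp: abs_le_iff divide_le_eq le_divide_eq)
      have yv: "y * v' = x" unfolding v'_def using False by (cases "y = 0") auto
      obtain v where v: "v \<in> K2" "\<bar>v' - v\<bar> < d2 v" using K2(2)[OF v'r] by blast
      have "\<bar>y\<bar> < d2 v" using hy hn dle2[OF v(1)] by linarith
      hence "\<bar>H (a + h)\<bar> \<le> C2 v * \<bar>y\<bar> ^ m" using D2(2)[OF _ v(2)] ah yv by metis
      also have "\<dots> \<le> C * norm h ^ m"
        using Cge2[OF v(1)] C0 hy by (intro mult_mono power_mono) auto
      finally show ?thesis .
    qed
  qed
  thus ?thesis using dpos by blast
qed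



lemma small_tendsto0:
  fixes E :: "real \<times> real \<Rightarrow> real"
  assumes "E \<in> o[at 0](\<lambda>h. norm h ^ m)"
  shows "(E \<longlongrightarrow> 0) (at 0)"
proof (rule tendstoI)
  fix \<epsilon> :: real assume ep: "\<epsilon> > 0"
  have "eventually (\<lambda>h. norm (E h) \<le> \<epsilon> / 2 * norm (norm h ^ m)) (at 0)"
    by (rule landau_o.smallD[OF assms]) (use ep in simp)
  moreover have "eventually (\<lambda>h::real\<times>real. norm h < 1) (at 0)"
    unfolding eventually_at0_iff by (auto intro!: exI[of _ 1])
  ultimately show "eventually (\<lambda>h. dist (E h) 0 < \<epsilon>) (at 0)"
  proof eventually_elim
    case (elim h)
    have "norm h ^ m \<le> 1" using elim(2) by (simp add: power_le_one)
    hence "\<epsilon> / 2 * norm h ^ m \<le> \<epsilon> / 2" using ep by (simp add: mult_left_le)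
    moreover have "\<bar>E h\<bar> \<le> \<epsilon> / 2 * norm h ^ m" using elim(1) by simp
    moreover have "dist (E h) 0 = \<bar>E h\<bar>" by simp
    ultimately show ?case using ep by linarith
  qed
qed

lemma O_to_o:
  fixes E :: "real \<times> real \<Rightarrow> real"
  assumes "\<exists>\<delta>>0. \<exists>C. \<forall>h. norm h < \<delta> \<longrightarrow> \<bar>E h\<bar> \<le> C * norm h ^ Suc k"
  shows "E \<in> o[at 0](\<lambda>h. norm h ^ k)"
proof (rule landau_o.smallI)
  obtain \<delta> C where dC: "\<delta> > 0" "\<And>h. norm h < \<delta> \<Longrightarrow> \<bar>E h\<bar> \<le> C * norm h ^ Suc k" using assms by blast
  fix c :: real assume c: "c > 0"
  define C' where "C' = max C 1"
  have C'pos: "C' > 0" unfolding C'_def by simp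
  show "eventually (\<lambda>h. norm (E h) \<le> c * norm (norm h ^ k)) (at 0)"
    unfolding eventually_at0_iff
  proof (intro exI[of _ "min \<delta> (c / C')"] conjI allI impI)
    show "0 < min \<delta> (c / C')" using dC c C'pos by simp
    fix h :: "real \<times> real" assume h: "h \<noteq> 0 \<and> norm h < min \<delta> (c / C')"
    have "\<bar>E h\<bar> \<le> C * norm h ^ Suc k" using dC h by simp
    also have "\<dots> \<le> C' * norm h ^ Suc k" unfolding C'_def by (intro mult_right_mono) auto
    also have "\<dots> = (C' * norm h) * norm h ^ k" by simp
    also have "\<dots> \<le> c * norm h ^ k"
    proof (intro mult_right_mono)
      have "norm h < c / C'" using h by simp
      thus "C' * norm h \<le> c" using C'pos by (simp add: field_simps)
    qed simp
    finally show "norm (E h) \<le> c * norm (norm h ^ k)" by simp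
  qed
qed

lemma deriv0:
  fixes F :: "real \<times> real \<Rightarrow> real"
  assumes Fa: "F a = 0" and small: "(\<lambda>h. F (a + h)) \<in> o[at 0](\<lambda>h. norm h ^ m)" and m: "m \<ge> 1"
  shows "(F has_derivative (\<lambda>h. 0)) (at a)"
  unfolding has_derivative_at
proof
  show "bounded_linear (\<lambda>h::real\<times>real. 0::real)" by simp
  show "(\<lambda>h. norm (F (a + h) - F a - 0) / norm h) \<midarrow>0\<rightarrow> 0"
  proof (rule tendstoI)
    fix \<epsilon> :: real assume ep: "\<epsilon> > 0"
    have "eventually (\<lambda>h. norm (F (a + h)) \<le> \<epsilon> / 2 * norm (norm h ^ m)) (at 0)"
      by (rule landau_o.smallD[OF small]) (use ep in simp)
    moreover have "eventually (\<lambda>h::real\<times>real. h \<noteq> 0 \<and> norm h < 1) (at 0)"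
      unfolding eventually_at0_iff by (auto intro!: exI[of _ 1])
    ultimately show "eventually (\<lambda>h. dist (norm (F (a + h) - F a - 0) / norm h) 0 < \<epsilon>) (at 0)"
    proof eventually_elim
      case (elim h)
      have nh: "norm h > 0" using elim(2) by simp
      have "norm h ^ m \<le> norm h ^ 1" using elim(2) m by (intro power_decreasing) auto
      hence nn: "norm h ^ m \<le> norm h" by simp
      have "\<bar>F (a + h)\<bar> \<le> \<epsilon> / 2 * norm h ^ m" using elim(1) by simp
      also have "\<dots> \<le> \<epsilon> / 2 * norm h" using nn ep by (intro mult_left_mono) auto
      finally have "\<bar>F (a + h)\<bar> \<le> \<epsilon> / 2 * norm h" .
      hence "\<bar>F (a + h)\<bar> / norm h \<le> \<epsilon> / 2" using nh by (simp add: divide_le_eq mult.commute)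
      moreover have "dist (norm (F (a + h) - F a - 0) / norm h) 0 = \<bar>F (a + h)\<bar> / norm h"
        using Fa by simp
      ultimately show ?case using ep by linarith
    qed
  qed
qed

lemma reg_add_pp:
  assumes "regular_at g w" "pp r"
  shows "regular_at (\<lambda>w. g w + r w) w"
proof -
  obtain p q where pq: "pp p" "pp q" "q w \<noteq> 0" "\<And>w'. q w' \<noteq> 0 \<Longrightarrow> g w' = p w' / q w'"
    using assms(1) unfolding regular_at_pp by blast
  have "pp (\<lambda>w. p w + r w * q w)" by (intro pp.intros pq assms(2))
  moreover have "\<forall>w'. q w' \<noteq> 0 \<longrightarrow> g w' + r w' = (p w' + r w' * q w') / q w'"
    using pq(4) by (simp add: field_simps)
  ultimately show ?thesis unfolding regular_at_pp using pq by blast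
qed

lemma reg_cong: "regular_at g w \<Longrightarrow> (\<And>w. g' w = g w) \<Longrightarrow> regular_at g' w"
proof -
  assume "regular_at g w" "\<And>w. g' w = g w"
  hence "g' = g" by auto
  thus ?thesis using \<open>regular_at g w\<close> by simp
qed



definition good :: "(real \<times> real \<Rightarrow> real) \<Rightarrow> bool" where
  "good f \<longleftrightarrow> continuous_on UNIV f \<and> (\<forall>a v.
     regular_at (\<lambda>w. f (fst a + fst w, snd a + fst w * snd w)) (0, v) \<and>
     regular_at (\<lambda>w. f (fst a + fst w * snd w, snd a + fst w)) (0, v))"

lemma finish:
  fixes g F1 Px :: "real \<times> real \<Rightarrow> real"
  assumes B: "\<exists>\<delta>>0. \<exists>C. \<forall>h. norm h < \<delta> \<longrightarrow> \<bar>F1 (a + h)\<bar> \<le> C * norm h ^ Suc k"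
    and g: "\<And>z. g z = F1 z + Px (z - a)" and Px: "poly2_deg_le k Px" and F1a: "F1 a = 0"
  shows "isCont g a \<and> has_poly_expansion k g a"
proof
  have o: "(\<lambda>h. F1 (a + h)) \<in> o[at 0](\<lambda>h. norm h ^ k)" by (rule O_to_o[OF B])
  have t: "((\<lambda>h. F1 (a + h)) \<longlongrightarrow> 0) (at 0)" by (rule small_tendsto0[OF o])
  have cP: "isCont Px 0" using pp_cont deg_le_pp[OF Px] by blast
  have "((\<lambda>h. F1 (a + h) + Px h) \<longlongrightarrow> 0 + Px 0) (at 0)"
    by (intro tendsto_add t) (use cP in \<open>simp add: isCont_def\<close>)
  moreover have "g a = Px 0" using g F1a by simp
  ultimately show "isCont g a" unfolding isCont_iff using g by simp
  have Q: "poly2_deg_le k (\<lambda>h. - Px 0 + Px h)" by (rule deg_le_const_add[OF Px])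
  have "(\<lambda>h. g (a + h) - g a - (- Px 0 + Px h)) = (\<lambda>h. F1 (a + h))"
    using g F1a by (auto simp: fun_eq_iff)
  thus "has_poly_expansion k g a" unfolding has_poly_expansion_def using Q o by metis
qed

lemma norm_swap: "norm (snd h, fst h) = norm (h :: real \<times> real)"
  by (cases h) (simp add: norm_Pair add.commute)

lemma small_swap:
  fixes F :: "real \<times> real \<Rightarrow> real"
  assumes "(\<lambda>h. F (a + h)) \<in> o[at 0](\<lambda>h. norm h ^ m)"
  shows "(\<lambda>h. F (a + (snd h, fst h))) \<in> o[at 0](\<lambda>h. norm h ^ m)"
proof (rule landau_o.smallI)
  fix c :: real assume c: "c > 0"
  obtain d where d: "d > 0" "\<And>h. h \<noteq> 0 \<Longrightarrow> norm h < d \<Longrightarrow> norm (F (a + h)) \<le> c * norm (norm h ^ m)"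
    using landau_o.smallD[OF assms c] unfolding eventually_at0_iff by blast
  show "eventually (\<lambda>h. norm (F (a + (snd h, fst h))) \<le> c * norm (norm h ^ m)) (at 0)"
    unfolding eventually_at0_iff
  proof (intro exI[of _ d] conjI allI impI d(1))
    fix h :: "real \<times> real" assume h: "h \<noteq> 0 \<and> norm h < d"
    have "(snd h, fst h) \<noteq> 0" using h by (cases h) (auto simp: zero_prod_def)
    thus "norm (F (a + (snd h, fst h))) \<le> c * norm (norm h ^ m)"
      using d(2)[of "(snd h, fst h)"] h norm_swap[of h] by simp
  qed
qed



lemma pair_minus: "(fst a + x, snd a + y) - a = (x::real, y::real)"
  by (simp add: prod_eq_iff)

lemma pair_plus: "a + (x, y) = (fst a + x, snd a + (y::real))"
  by (simp add: prod_eq_iff)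

lemma local_step:
  fixes f g1 g2 :: "real \<times> real \<Rightarrow> real"
  assumes good: "good f"
    and der: "\<And>z. (f has_derivative (\<lambda>h. g1 z * fst h + g2 z * snd h)) (at z)"
    and ex: "has_poly_expansion (Suc k) f a"
  shows "(\<forall>v. regular_at (\<lambda>w. g1 (fst a + fst w, snd a + fst w * snd w)) (0, v) \<and>
              regular_at (\<lambda>w. g1 (fst a + fst w * snd w, snd a + fst w)) (0, v) \<and>
              regular_at (\<lambda>w. g2 (fst a + fst w, snd a + fst w * snd w)) (0, v) \<and>
              regular_at (\<lambda>w. g2 (fst a + fst w * snd w, snd a + fst w)) (0, v)) \<and>
         isCont g1 a \<and> isCont g2 a \<and> has_poly_expansion k g1 a \<and> has_poly_expansion k g2 a"
proof -
  obtain P where Pd: "poly2_deg_le (Suc k) P"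
    and E: "(\<lambda>h. f (a + h) - f a - P h) \<in> o[at 0](\<lambda>h. norm h ^ Suc k)"
    using ex unfolding has_poly_expansion_def by blast
  have ppP: "pp P" by (rule deg_le_pp[OF Pd])
  have P0: "P 0 = 0"
  proof -
    have l1: "((\<lambda>h. f (a + h) - f a - P h) \<longlongrightarrow> 0) (at 0)" by (rule small_tendsto0[OF E])
    have cf: "isCont f a" using good unfolding good_def
      using continuous_on_eq_continuous_at[OF open_UNIV] by blast
    have cP: "isCont P 0" by (rule pp_cont[OF ppP])
    have l2: "((\<lambda>h. f (a + h) - f a - P h) \<longlongrightarrow> f a - f a - P 0) (at 0)"
      by (intro tendsto_diff tendsto_const) (use cf cP in \<open>auto simp: isCont_iff isCont_def\<close>)
    have "f a - f a - P 0 = 0" using tendsto_unique[OF _ l2 l1] by simp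
    thus ?thesis by simp
  qed
  obtain Px Py where Pxy: "poly2_deg_le k Px" "poly2_deg_le k Py"
    "\<And>h. (P has_derivative (\<lambda>d. Px h * fst d + Py h * snd d)) (at h)"
    using deg_le_deriv[OF Pd] by blast
  define F where "F z = f z - f a - P (z - a)" for z
  define F1 where "F1 z = g1 z - Px (z - a)" for z
  define F2 where "F2 z = g2 z - Py (z - a)" for z
  have derF: "(F has_derivative (\<lambda>h. F1 z * fst h + F2 z * snd h)) (at z)" for z
  proof -
    have dm: "((\<lambda>z. z - a) has_derivative (\<lambda>h. h)) (at z)"
      by (rule has_derivative_eq_rhs, rule has_derivative_diff[OF has_derivative_ident has_derivative_const]) auto
    have dPa: "((\<lambda>z. P (z - a)) has_derivative (\<lambda>h. Px (z - a) * fst h + Py (z - a) * snd h)) (at z)"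
      using has_derivative_compose[OF dm Pxy(3)] by simp
    show ?thesis unfolding F_def[abs_def]
      apply (rule has_derivative_eq_rhs)
       apply (rule has_derivative_diff[OF has_derivative_diff[OF der has_derivative_const] dPa])
      by (auto simp: fun_eq_iff F1_def F2_def algebra_simps)
  qed
  have smallF: "(\<lambda>h. F (a + h)) \<in> o[at 0](\<lambda>h. norm h ^ Suc k)"
    using E by (simp add: F_def)
  have Fa: "F a = 0" using P0 by (simp add: F_def)
  have d0: "(F has_derivative (\<lambda>h. 0)) (at a)" by (rule deriv0[OF Fa smallF]) simp
  have L0: "(\<lambda>h. F1 a * fst h + F2 a * snd h) = (\<lambda>h. 0)" by (rule has_derivative_unique[OF derF d0])
  have F1a: "F1 a = 0" using fun_cong[OF L0, of "(1,0)"] by simp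
  have F2a: "F2 a = 0" using fun_cong[OF L0, of "(0,1)"] by simp
  have regF1: "regular_at (\<lambda>w. F (fst a + fst w, snd a + fst w * snd w)) (0, v)" for v
  proof -
    have r: "regular_at (\<lambda>w. f (fst a + fst w, snd a + fst w * snd w)) (0, v)"
      using good unfolding good_def by blast
    have pr: "pp (\<lambda>w. - f a - P (fst w, fst w * snd w))"
      by (intro pp_diff pp_subst[OF ppP] pp.intros)
    show ?thesis by (rule reg_cong[OF reg_add_pp[OF r pr]]) (simp add: F_def pair_minus)
  qed
  have regF2: "regular_at (\<lambda>w. F (fst a + fst w * snd w, snd a + fst w)) (0, v)" for v
  proof -
    have r: "regular_at (\<lambda>w. f (fst a + fst w * snd w, snd a + fst w)) (0, v)"
      using good unfolding good_def by blast
    have pr: "pp (\<lambda>w. - f a - P (fst w * snd w, fst w))"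
      by (intro pp_diff pp_subst[OF ppP] pp.intros)
    show ?thesis by (rule reg_cong[OF reg_add_pp[OF r pr]]) (simp add: F_def pair_minus)
  qed
  have coreA: "regular_at (\<lambda>w. F1 (fst a + fst w, snd a + fst w * snd w)) (0, v) \<and>
         regular_at (\<lambda>w. F2 (fst a + fst w, snd a + fst w * snd w)) (0, v) \<and>
         (\<exists>\<delta>>0. \<exists>C. \<forall>u v'. \<bar>u\<bar> < \<delta> \<and> \<bar>v' - v\<bar> < \<delta> \<longrightarrow>
             \<bar>F1 (fst a + u, snd a + u * v')\<bar> \<le> C * \<bar>u\<bar> ^ Suc k \<and>
             \<bar>F2 (fst a + u, snd a + u * v')\<bar> \<le> C * \<bar>u\<bar> ^ Suc k)" for v
    by (rule core[OF derF smallF _ F1a F2a regF1]) simp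
  define Fs where "Fs z = F (snd z, fst z)" for z
  define as where "as = (snd a, fst a)"
  have derFs: "(Fs has_derivative (\<lambda>h. F2 (snd z, fst z) * fst h + F1 (snd z, fst z) * snd h)) (at z)" for z
  proof -
    have ds: "((\<lambda>z::real\<times>real. (snd z, fst z)) has_derivative (\<lambda>h. (snd h, fst h))) (at z)"
      by (intro has_derivative_Pair has_derivative_fst[OF has_derivative_ident]
          has_derivative_snd[OF has_derivative_ident])
    show ?thesis unfolding Fs_def[abs_def]
      using has_derivative_compose[OF ds derF] by (simp add: add.commute)
  qed
  have smallFs: "(\<lambda>h. Fs (as + h)) \<in> o[at 0](\<lambda>h. norm h ^ Suc k)"
  proof -
    have "(\<lambda>h. F (a + (snd h, fst h))) \<in> o[at 0](\<lambda>h. norm h ^ Suc k)" by (rule small_swap[OF smallF])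
    moreover have "(\<lambda>h. Fs (as + h)) = (\<lambda>h. F (a + (snd h, fst h)))"
      by (auto simp: fun_eq_iff Fs_def as_def pair_plus)
    ultimately show ?thesis by simp
  qed
  have regFs: "regular_at (\<lambda>w. Fs (fst as + fst w, snd as + fst w * snd w)) (0, v)" for v
    by (rule reg_cong[OF regF2]) (simp add: Fs_def as_def)
  have coreB: "regular_at (\<lambda>w. F2 (fst a + fst w * snd w, snd a + fst w)) (0, v) \<and>
         regular_at (\<lambda>w. F1 (fst a + fst w * snd w, snd a + fst w)) (0, v) \<and>
         (\<exists>\<delta>>0. \<exists>C. \<forall>u v'. \<bar>u\<bar> < \<delta> \<and> \<bar>v' - v\<bar> < \<delta> \<longrightarrow>
             \<bar>F2 (fst a + u * v', snd a + u)\<bar> \<le> C * \<bar>u\<bar> ^ Suc k \<and>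
             \<bar>F1 (fst a + u * v', snd a + u)\<bar> \<le> C * \<bar>u\<bar> ^ Suc k)" for v
    using core[OF derFs smallFs _ _ _ regFs, of v] F1a F2a by (simp add: as_def)
  have regs: "regular_at (\<lambda>w. g1 (fst a + fst w, snd a + fst w * snd w)) (0, v) \<and>
              regular_at (\<lambda>w. g1 (fst a + fst w * snd w, snd a + fst w)) (0, v) \<and>
              regular_at (\<lambda>w. g2 (fst a + fst w, snd a + fst w * snd w)) (0, v) \<and>
              regular_at (\<lambda>w. g2 (fst a + fst w * snd w, snd a + fst w)) (0, v)" for v
  proof (intro conjI)
    have px: "pp Px" "pp Py" using deg_le_pp Pxy by blast+
    show "regular_at (\<lambda>w. g1 (fst a + fst w, snd a + fst w * snd w)) (0, v)"
      by (rule reg_cong[OF reg_add_pp[OF conjunct1[OF coreA] pp_subst[OF px(1)]]])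
         (auto intro: pp.intros simp: F1_def pair_minus)
    show "regular_at (\<lambda>w. g2 (fst a + fst w, snd a + fst w * snd w)) (0, v)"
      by (rule reg_cong[OF reg_add_pp[OF conjunct1[OF conjunct2[OF coreA]] pp_subst[OF px(2)]]])
         (auto intro: pp.intros simp: F2_def pair_minus)
    show "regular_at (\<lambda>w. g2 (fst a + fst w * snd w, snd a + fst w)) (0, v)"
      by (rule reg_cong[OF reg_add_pp[OF conjunct1[OF coreB] pp_subst[OF px(2)]]])
         (auto intro: pp.intros simp: F2_def pair_minus)
    show "regular_at (\<lambda>w. g1 (fst a + fst w * snd w, snd a + fst w)) (0, v)"
      by (rule reg_cong[OF reg_add_pp[OF conjunct1[OF conjunct2[OF coreB]] pp_subst[OF px(1)]]])
         (auto intro: pp.intros simp: F1_def pair_minus)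
  qed
  have B1: "\<exists>\<delta>>0. \<exists>C. \<forall>h. norm h < \<delta> \<longrightarrow> \<bar>F1 (a + h)\<bar> \<le> C * norm h ^ Suc k"
    by (rule bound_cover) (use coreA coreB in meson)+
  have B2: "\<exists>\<delta>>0. \<exists>C. \<forall>h. norm h < \<delta> \<longrightarrow> \<bar>F2 (a + h)\<bar> \<le> C * norm h ^ Suc k"
    by (rule bound_cover) (use coreA coreB in meson)+
  have f1: "isCont g1 a \<and> has_poly_expansion k g1 a"
    by (rule finish[OF B1 _ Pxy(1) F1a]) (simp add: F1_def)
  have f2: "isCont g2 a \<and> has_poly_expansion k g2 a"
    by (rule finish[OF B2 _ Pxy(2) F2a]) (simp add: F2_def)
  show ?thesis using regs f1 f2 by blast
qed



lemma exp_diff: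
  fixes f :: "real \<times> real \<Rightarrow> real"
  assumes cf: "continuous_on UNIV f" and ex: "has_poly_expansion (Suc k) f a"
  shows "\<exists>\<alpha> \<beta>. (f has_derivative (\<lambda>h. \<alpha> * fst h + \<beta> * snd h)) (at a)"
proof -
  obtain P where Pd: "poly2_deg_le (Suc k) P"
    and E: "(\<lambda>h. f (a + h) - f a - P h) \<in> o[at 0](\<lambda>h. norm h ^ Suc k)"
    using ex unfolding has_poly_expansion_def by blast
  have ppP: "pp P" by (rule deg_le_pp[OF Pd])
  have P0: "P 0 = 0"
  proof -
    have l1: "((\<lambda>h. f (a + h) - f a - P h) \<longlongrightarrow> 0) (at 0)" by (rule small_tendsto0[OF E])
    have cfa: "isCont f a" using cf continuous_on_eq_continuous_at[OF open_UNIV] by blast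
    have cP: "isCont P 0" by (rule pp_cont[OF ppP])
    have l2: "((\<lambda>h. f (a + h) - f a - P h) \<longlongrightarrow> f a - f a - P 0) (at 0)"
      by (intro tendsto_diff tendsto_const) (use cfa cP in \<open>auto simp: isCont_iff isCont_def\<close>)
    have "f a - f a - P 0 = 0" using tendsto_unique[OF _ l2 l1] by simp
    thus ?thesis by simp
  qed
  obtain Px Py where Pxy: "\<And>h. (P has_derivative (\<lambda>d. Px h * fst d + Py h * snd d)) (at h)"
    using deg_le_deriv[OF Pd] by blast
  define F where "F z = f z - f a - P (z - a)" for z
  have smallF: "(\<lambda>h. F (a + h)) \<in> o[at 0](\<lambda>h. norm h ^ Suc k)"
    using E by (simp add: F_def)
  have Fa: "F a = 0" using P0 by (simp add: F_def)
  have d0: "(F has_derivative (\<lambda>h. 0)) (at a)" by (rule deriv0[OF Fa smallF]) simp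
  have dm: "((\<lambda>z. z - a) has_derivative (\<lambda>h. h)) (at a)"
    by (rule has_derivative_eq_rhs, rule has_derivative_diff[OF has_derivative_ident has_derivative_const]) auto
  have dPa: "((\<lambda>z. P (z - a)) has_derivative (\<lambda>h. Px 0 * fst h + Py 0 * snd h)) (at a)"
    using has_derivative_compose[OF dm Pxy[of "a - a"]] by simp
  have "((\<lambda>z. F z + f a + P (z - a)) has_derivative (\<lambda>h. Px 0 * fst h + Py 0 * snd h)) (at a)"
    by (rule has_derivative_eq_rhs, rule has_derivative_add[OF has_derivative_add[OF d0 has_derivative_const] dPa]) auto
  moreover have "(\<lambda>z. F z + f a + P (z - a)) = f" by (auto simp: fun_eq_iff F_def)
  ultimately show ?thesis by auto
qed

lemma step:
  assumes good: "good f" and ex: "\<forall>a. has_poly_expansion (Suc k) f a"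
  shows "\<exists>g1 g2. (\<forall>z. (f has_derivative (\<lambda>h. g1 z * fst h + g2 z * snd h)) (at z)) \<and>
      good g1 \<and> good g2 \<and> (\<forall>a. has_poly_expansion k g1 a) \<and> (\<forall>a. has_poly_expansion k g2 a)"
proof -
  have cf: "continuous_on UNIV f" using good unfolding good_def by blast
  have "\<forall>a. \<exists>\<alpha> \<beta>. (f has_derivative (\<lambda>h. \<alpha> * fst h + \<beta> * snd h)) (at a)"
    using exp_diff[OF cf] ex by blast
  then obtain g1 g2 where der: "\<And>a. (f has_derivative (\<lambda>h. g1 a * fst h + g2 a * snd h)) (at a)"
    by metis
  have L: "\<And>a. (\<forall>v. regular_at (\<lambda>w. g1 (fst a + fst w, snd a + fst w * snd w)) (0, v) \<and>
              regular_at (\<lambda>w. g1 (fst a + fst w * snd w, snd a + fst w)) (0, v) \<and>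
              regular_at (\<lambda>w. g2 (fst a + fst w, snd a + fst w * snd w)) (0, v) \<and>
              regular_at (\<lambda>w. g2 (fst a + fst w * snd w, snd a + fst w)) (0, v)) \<and>
         isCont g1 a \<and> isCont g2 a \<and> has_poly_expansion k g1 a \<and> has_poly_expansion k g2 a"
    using local_step[OF good der] ex by blast
  have "good g1" unfolding good_def using L by (auto intro: continuous_at_imp_continuous_on)
  moreover have "good g2" unfolding good_def using L by (auto intro: continuous_at_imp_continuous_on)
  ultimately show ?thesis using der L by blast
qed

lemma good_Ck: "good f \<Longrightarrow> (\<forall>a. has_poly_expansion k f a) \<Longrightarrow> Ck k f"
proof (induction k arbitrary: f)
  case 0
  then show ?case by (simp add: good_def)
next
  case (Suc k f)
  obtain g1 g2 where g: "\<forall>z. (f has_derivative (\<lambda>h. g1 z * fst h + g2 z * snd h)) (at z)"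
    "good g1" "good g2" "\<forall>a. has_poly_expansion k g1 a" "\<forall>a. has_poly_expansion k g2 a"
    using step[OF Suc.prems] by blast
  have "Ck k g1" "Ck k g2" using Suc.IH g by auto
  thus ?case using g(1) by auto
qed

lemma good_of_Rk1: "Rk1 0 f \<Longrightarrow> good f"
proof -
  assume R: "Rk1 0 f"
  then obtain S where S: "blowup_regular S f" unfolding Rk1_def by blast
  have cf: "continuous_on UNIV f" using R by (simp add: Rk1_def Rk_def)
  have "regular_at (\<lambda>w. f (fst a + fst w, snd a + fst w * snd w)) (0, v) \<and>
        regular_at (\<lambda>w. f (fst a + fst w * snd w, snd a + fst w)) (0, v)" for a v
  proof (cases "a \<in> S")
    case True
    thus ?thesis using S unfolding blowup_regular_def by blast
  next
    case False
    hence "regular_at f a" using S unfolding blowup_regular_def by blast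
    then obtain p q where pq: "pp p" "pp q" "q a \<noteq> 0" "\<And>w. q w \<noteq> 0 \<Longrightarrow> f w = p w / q w"
      unfolding regular_at_pp by blast
    have a: "(fst a, snd a) = a" by simp
    show ?thesis unfolding regular_at_pp
    proof (intro conjI)
      show "\<exists>p' q'. pp p' \<and> pp q' \<and> q' (0, v) \<noteq> 0 \<and>
          (\<forall>w'. q' w' \<noteq> 0 \<longrightarrow> f (fst a + fst w', snd a + fst w' * snd w') = p' w' / q' w')"
        using pq a
        by (intro exI[of _ "\<lambda>w. p (fst a + fst w, snd a + fst w * snd w)"]
                  exI[of _ "\<lambda>w. q (fst a + fst w, snd a + fst w * snd w)"])
           (auto intro!: pp_subst pp.intros)
      show "\<exists>p' q'. pp p' \<and> pp q' \<and> q' (0, v) \<noteq> 0 \<and>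
          (\<forall>w'. q' w' \<noteq> 0 \<longrightarrow> f (fst a + fst w' * snd w', snd a + fst w') = p' w' / q' w')"
        using pq a
        by (intro exI[of _ "\<lambda>w. p (fst a + fst w * snd w, snd a + fst w)"]
                  exI[of _ "\<lambda>w. q (fst a + fst w * snd w, snd a + fst w)"])
           (auto intro!: pp_subst pp.intros)
    qed
  qed
  thus "good f" using cf unfolding good_def by blast
qed

theorem theorem3p8:
  fixes k :: nat and f :: "real \<times> real \<Rightarrow> real"
  assumes "Rk1 0 f"
  shows "Rk1 k f \<longleftrightarrow> (\<forall>a. has_poly_expansion k f a)"
proof
  assume "Rk1 k f"
  hence "Ck k f" by (simp add: Rk1_def Rk_def)
  thus "\<forall>a. has_poly_expansion k f a" using Ck_taylor by blast
next
  assume ex: "\<forall>a. has_poly_expansion k f a"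
  have "Ck k f" by (rule good_Ck[OF good_of_Rk1[OF assms] ex])
  thus "Rk1 k f" using assms by (simp add: Rk1_def Rk_def)
qed


end
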